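(* Let $\mathcal{G}=(V,\mathcal{E})$ be a plurigraph with $V=[n]$, and let $(V,E)\in\mathcal{E}$ be a contraction-ready pluriedge with contraction-ready composition $(B_1,\dots,B_\ell)$ and with $k\ge 0$ such that $B_i$ is a singleton if and only if $i>k$. Let $r_i=|B_i|-1$. Then $$Y_{\mathcal{G}}=Y_{\mathcal{G}\setminus(V,E)}-Y_{\mathcal{G}/(V,E)}\uparrow^{(r_1,r_2,\dots,r_k)}.$$
   Context: Let $\mathbb{P}=\{1,2,\dots\}$ and work in the ring of formal power series over a field $\mathbb{K}$ of characteristic zero in noncommuting variables $y_1,y_2,\dots$. A graph is a pair $(V,E)$ with $E$ a finite multiset of unordered pairs $uv$ of (not necessarily distinct) elements of $V$ (loops and multiple edges allowed). A plurigraph is a pair $\mathcal{G}=(V,\mathcal{E})$ with $V$ a finite set and $\mathcal{E}$ a finite multiset of graphs $(V,E)$ with vertex set $V$ and $E\neq\emptyset$ (pluriedges). A map $f:V\to\mathbb{P}$ is a proper coloring of $\mathcal{G}$ if for every pluriedge $(V,E)\in\mathcal{E}$ there is an edge $uv\in E$ with $f(u)\neq f(v)$. For $V=[n]$, the chromatic nc-symmetric function is $Y_{\mathcal{G}}=\sum_f y_{f(1)}y_{f(2)}\cdots y_{f(n)}$, summed over proper colorings $f$. Deletion: $\mathcal{G}\setminus(V,E)=(V,\mathcal{E}')$ where $\mathcal{E}'$ is $\mathcal{E}$ with one copy of $(V,E)$ removed. For disjoint $A,B\subseteq[n]$ write $A>B$ if $a>b$ for all $a\in A,b\in B$. A pluriedge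 $(V,E)$ is contraction-ready if the connected components of the graph $(V,E)$ can be ordered as $B_1,\dots,B_\ell$ with $B_i>B_j$ whenever $i<j$ and such that there is $k\ge0$ with $B_i$ a singleton iff $i>k$; $(B_1,\dots,B_\ell)$ is the contraction-ready composition. Contraction: $\mathcal{G}/(V,E)$ is the plurigraph with vertex set $[\ell]$, where all vertices of $B_i$ are identified to the single vertex $\ell-i+1$ (call this map $\phi:[n]\to[\ell]$), and whose pluriedge multiset is $\{([\ell],\{\phi(u)\phi(v): uv\in E'\}) : (V,E')\in\mathcal{E}'\}$ (edges taken as multisets; loops may arise). Induction: for nonnegative integers $r_1,\dots,r_k$ and a monomial $y_{i_1}\cdots y_{i_m}$ with $k\le m$, set $y_{i_1}\cdots y_{i_m}\uparrow^{(r_1,\dots,r_k)}=y_{i_1}\cdots y_{i_{m-k}}\,y_{i_{m-k+1}}^{1+r_k}\cdots y_{i_{m-1}}^{1+r_2}\,y_{i_m}^{1+r_1}$, extended linearly (termwise) to homogeneous series of degree $m$. *)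

theory Defs
  imports Main "HOL-Library.Multiset" "HOL-Library.Uprod"
begin

text \<open>Noncommutative formal power series in y_1, y_2, ... over a field 'k are represented
  as coefficient functions on words: the word [i1,...,im] (a list of positive integers)
  stands for the monomial y_i1 ... y_im.\<close>

type_synonym 'k ncseries = "nat list \<Rightarrow> 'k"

text \<open>A graph on vertex set [n] = {1..n}: a finite multiset of unordered pairs (loops allowed).
  A plurigraph on [n]: a finite multiset of such graphs (pluriedges), each with nonempty edge set.\<close>

type_synonym graph_edges = "nat uprod multiset"
type_synonym plurigraph_edges = "nat uprod multiset multiset"

definition is_plurigraph :: "nat \<Rightarrow> plurigraph_edges \<Rightarrow> bool" where
  "is_plurigraph n P \<longleftrightarrow>
     (\<forall>E\<in>#P. E \<noteq> {#} \<and> (\<forall>e\<in>#E. set_uprod e \<subseteq> {1..n}))"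

text \<open>A word w of length n encodes the map f : [n] \<rightarrow> P with f i = w ! (i - 1).\<close>

definition proper_coloring :: "nat \<Rightarrow> plurigraph_edges \<Rightarrow> nat list \<Rightarrow> bool" where
  "proper_coloring n P w \<longleftrightarrow>
     length w = n \<and> (\<forall>c\<in>set w. 1 \<le> c) \<and>
     (\<forall>E\<in>#P. \<exists>u v. Upair u v \<in># E \<and> w ! (u - 1) \<noteq> w ! (v - 1))"

text \<open>Chromatic nc-symmetric function Y_G (each proper colouring contributes its monomial;
  distinct colourings give distinct words, so all coefficients are 0 or 1).\<close>

definition chrom_nc :: "nat \<Rightarrow> plurigraph_edges \<Rightarrow> 'k::field_char_0 ncseries" where
  "chrom_nc n P w = (if proper_coloring n P w then 1 else 0)"

definition graph_conn :: "graph_edges \<Rightarrow> (nat \<times> nat) set" where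
  "graph_conn E = {(u, v). Upair u v \<in># E}\<^sup>*"

definition components :: "nat \<Rightarrow> graph_edges \<Rightarrow> nat set set" where
  "components n E = (\<lambda>u. {v \<in> {1..n}. (u, v) \<in> graph_conn E}) ` {1..n}"

text \<open>Contraction-ready composition (B_1,...,B_l) (as a list, 0-indexed) with parameter k.\<close>

definition contraction_ready_comp ::
    "nat \<Rightarrow> graph_edges \<Rightarrow> nat set list \<Rightarrow> nat \<Rightarrow> bool" where
  "contraction_ready_comp n E Bs k \<longleftrightarrow>
     distinct Bs \<and> set Bs = components n E \<and>
     (\<forall>i j. i < j \<and> j < length Bs \<longrightarrow> (\<forall>a\<in>Bs ! i. \<forall>b\<in>Bs ! j. b < a)) \<and>
     k \<le> length Bs \<and>
     (\<forall>i < length Bs. (card (Bs ! i) = 1 \<longleftrightarrow> k \<le> i))"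

text \<open>phi: vertices of B_i (1-indexed) go to l - i + 1; with 0-indexed i this is l - i.\<close>

definition contr_map :: "nat set list \<Rightarrow> nat \<Rightarrow> nat" where
  "contr_map Bs v = length Bs - (THE i. i < length Bs \<and> v \<in> Bs ! i)"

definition contract ::
    "nat set list \<Rightarrow> plurigraph_edges \<Rightarrow> graph_edges \<Rightarrow> plurigraph_edges" where
  "contract Bs P E = image_mset (image_mset (map_uprod (contr_map Bs))) (P - {#E#})"

text \<open>Induction on monomials: rs = [r_1,...,r_k]; the last k letters of the word u
  get exponents 1 + r_k, ..., 1 + r_1.\<close>

definition induce_word :: "nat list \<Rightarrow> nat list \<Rightarrow> nat list" where
  "induce_word rs u =
     take (length u - length rs) u @
     concat (map2 (\<lambda>a e. replicate (Suc e) a) (drop (length u - length rs) u) (rev rs))"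

text \<open>Termwise linear extension to homogeneous series of degree m (m \<ge> length rs).
  The sum ranges over the (finite) set of monomials of degree m mapped to w.\<close>

definition induce :: "nat \<Rightarrow> nat list \<Rightarrow> 'k::field_char_0 ncseries \<Rightarrow> 'k ncseries" where
  "induce m rs F w =
     (\<Sum>u \<in> {u. length u = m \<and> set u \<subseteq> set w \<and> induce_word rs u = w}. F u)"

end

theory Submission imports Defs begin

lemma concat_nth_block:
  "j < length xs \<Longrightarrow> sum_list (map length (take j xs)) \<le> p \<Longrightarrow>
   p < sum_list (map length (take (Suc j) xs)) \<Longrightarrow>
   concat xs ! p = xs ! j ! (p - sum_list (map length (take j xs)))"
proof (induction xs arbitrary: j p)
  case Nil then show ?case by simp
next
  case (Cons x xs)
  show ?case
  proof (cases j)
    case 0 then show ?thesis using Cons.prems by (simp add: nth_append)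
  next
    case (Suc j')
    then have "length x \<le> p" using Cons.prems by simp
    then have "concat (x # xs) ! p = concat xs ! (p - length x)" by (simp add: nth_append)
    also have "\<dots> = xs ! j' ! (p - length x - sum_list (map length (take j' xs)))"
      using Cons.prems Suc by (intro Cons.IH) auto
    finally show ?thesis using Suc by (simp add: diff_diff_add)
  qed
qed

lemma map_length_map2:
  "length u = length Cs \<Longrightarrow> map length (map2 (\<lambda>a B. replicate (card B) a) u Cs) = map card Cs"
  by (induction u Cs rule: list_induct2) auto

lemma concat_map2_ones:
  "length u = length Cs \<Longrightarrow> (\<forall>B\<in>set Cs. card B = 1) \<Longrightarrow>
   concat (map2 (\<lambda>a B. replicate (card B) a) u Cs) = u"
  by (induction u Cs rule: list_induct2) auto

lemma concat_map2_pos: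
  "length u = length Cs \<Longrightarrow> (\<forall>B\<in>set Cs. card B \<ge> 1) \<Longrightarrow>
   concat (map2 (\<lambda>a e. replicate (Suc e) a) u (map (\<lambda>B. card B - 1) Cs)) =
   concat (map2 (\<lambda>a B. replicate (card B) a) u Cs)"
proof (induction u Cs rule: list_induct2)
  case Nil then show ?case by simp
next
  case (Cons x xs y ys)
  have "card y \<ge> 1" using Cons.prems by simp
  then have "replicate (Suc (card y - 1)) x = replicate (card y) x" by simp
  then show ?case using Cons by simp
qed

lemma downclosed_interval:
  fixes D :: "nat set"
  assumes "finite D" "\<forall>x\<in>D. 1 \<le> x" "\<forall>x\<in>D. \<forall>y. 1 \<le> y \<and> y \<le> x \<longrightarrow> y \<in> D"
  shows "D = {1..card D}"
proof (cases "D = {}")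
  case True then show ?thesis by simp
next
  case False
  have "D = {1..Max D}"
  proof
    show "D \<subseteq> {1..Max D}" using assms False by auto
    show "{1..Max D} \<subseteq> D"
    proof
      fix y assume y: "y \<in> {1..Max D}"
      have "Max D \<in> D" using assms(1) False by (rule Max_in)
      then show "y \<in> D" using assms(3) y by auto
    qed
  qed
  moreover have "card {1..Max D} = Max D" by simp
  ultimately show ?thesis by simp
qed


locale crc =
  fixes n :: nat and E :: graph_edges and Bs :: "nat set list" and k :: nat
  assumes crc: "contraction_ready_comp n E Bs k"
    and Eok: "\<forall>e\<in>#E. set_uprod e \<subseteq> {1..n}"
begin

lemma dist: "distinct Bs" and setBs: "set Bs = components n E"
  and ord: "\<And>i j a b. i < j \<Longrightarrow> j < length Bs \<Longrightarrow> a \<in> Bs ! i \<Longrightarrow> b \<in> Bs ! j \<Longrightarrow> b < a"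
  and kle: "k \<le> length Bs"
  and sing: "\<And>i. i < length Bs \<Longrightarrow> card (Bs ! i) = 1 \<longleftrightarrow> k \<le> i"
  using crc unfolding contraction_ready_comp_def by blast+

lemma blk_form: "i < length Bs \<Longrightarrow> \<exists>c\<in>{1..n}. Bs ! i = {v\<in>{1..n}. (c, v) \<in> graph_conn E}"
  using nth_mem[of i Bs] setBs unfolding components_def by auto

lemma blk_sub: "i < length Bs \<Longrightarrow> Bs ! i \<subseteq> {1..n}"
  using blk_form by blast

lemma blk_fin: "i < length Bs \<Longrightarrow> finite (Bs ! i)"
  using blk_sub finite_subset by blast

lemma blk_ne: "i < length Bs \<Longrightarrow> Bs ! i \<noteq> {}"
  using blk_form unfolding graph_conn_def by fastforce

lemma blk_card: "i < length Bs \<Longrightarrow> card (Bs ! i) \<ge> 1"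
  using blk_fin blk_ne by (simp add: Suc_le_eq card_gt_0_iff)

lemma uniq: "i < length Bs \<Longrightarrow> j < length Bs \<Longrightarrow> v \<in> Bs ! i \<Longrightarrow> v \<in> Bs ! j \<Longrightarrow> i = j"
proof (rule ccontr)
  assume a: "i < length Bs" "j < length Bs" "v \<in> Bs ! i" "v \<in> Bs ! j" "i \<noteq> j"
  then consider "i < j" | "j < i" by linarith
  then show False
  proof cases
    case 1 then show False using ord[OF 1 a(2) a(3) a(4)] by simp
  next
    case 2 then show False using ord[OF 2 a(1) a(4) a(3)] by simp
  qed
qed

lemma cover: "v \<in> {1..n} \<Longrightarrow> \<exists>i<length Bs. v \<in> Bs ! i"
proof -
  assume v: "v \<in> {1..n}"
  have "{x\<in>{1..n}. (v, x) \<in> graph_conn E} \<in> set Bs"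
    using v setBs unfolding components_def by auto
  then obtain i where "i < length Bs" "Bs ! i = {x\<in>{1..n}. (v, x) \<in> graph_conn E}"
    by (metis in_set_conv_nth)
  then show ?thesis using v unfolding graph_conn_def by auto
qed

lemma cmap: "i < length Bs \<Longrightarrow> v \<in> Bs ! i \<Longrightarrow> contr_map Bs v = length Bs - i"
proof -
  assume i: "i < length Bs" "v \<in> Bs ! i"
  have "(THE i. i < length Bs \<and> v \<in> Bs ! i) = i"
  proof (rule the_equality)
    show "i < length Bs \<and> v \<in> Bs ! i" using i by simp
    fix i' assume "i' < length Bs \<and> v \<in> Bs ! i'"
    then show "i' = i" using uniq i by blast
  qed
  then show ?thesis unfolding contr_map_def by simp
qed

lemma edge_in: "Upair a b \<in># E \<Longrightarrow> a \<in> {1..n} \<and> b \<in> {1..n}"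
  using Eok by fastforce

lemma same_block:
  assumes "i < length Bs" "a \<in> Bs ! i" "(a, b) \<in> graph_conn E" "b \<in> {1..n}"
  shows "b \<in> Bs ! i"
proof -
  obtain c where c: "Bs ! i = {v\<in>{1..n}. (c, v) \<in> graph_conn E}" using blk_form assms(1) by blast
  then have "(c, a) \<in> graph_conn E" using assms(2) by auto
  then have "(c, b) \<in> graph_conn E" using assms(3) unfolding graph_conn_def by auto
  then show ?thesis using c assms(4) by auto
qed

lemma edge_block:
  assumes "Upair a b \<in># E"
  shows "contr_map Bs a = contr_map Bs b"
proof -
  from edge_in[OF assms] have ab: "a \<in> {1..n}" "b \<in> {1..n}" by auto
  obtain i where i: "i < length Bs" "a \<in> Bs ! i" using cover ab by blast
  have "(a, b) \<in> graph_conn E" using assms unfolding graph_conn_def by auto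
  then have "b \<in> Bs ! i" using same_block i ab by blast
  then show ?thesis using cmap i by simp
qed

lemma const_block:
  assumes mono: "\<forall>a b. Upair a b \<in># E \<longrightarrow> w ! (a - 1) = w ! (b - 1)"
    and i: "i < length Bs" and ab: "a \<in> Bs ! i" "b \<in> Bs ! i"
  shows "w ! (a - 1) = w ! (b - 1)"
proof -
  obtain c where c: "Bs ! i = {v\<in>{1..n}. (c, v) \<in> graph_conn E}" using blk_form i by blast
  have *: "(c, v) \<in> graph_conn E \<Longrightarrow> w ! (c - 1) = w ! (v - 1)" for v
    unfolding graph_conn_def
  proof (induction rule: rtrancl_induct)
    case base then show ?case by simp
  next
    case (step y z) then show ?case using mono by auto
  qed
  show ?thesis using *[of a] *[of b] ab c by auto
qed


lemma revnth: "j < length Bs \<Longrightarrow> rev Bs ! j = Bs ! (length Bs - Suc j)"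
  by (simp add: rev_nth)

lemma ordR: "t < t' \<Longrightarrow> t' < length Bs \<Longrightarrow> x \<in> rev Bs ! t \<Longrightarrow> y \<in> rev Bs ! t' \<Longrightarrow> x < y"
  using ord[of "length Bs - Suc t'" "length Bs - Suc t" y x] by (simp add: revnth)

lemma uniqR: "i < length Bs \<Longrightarrow> j < length Bs \<Longrightarrow> v \<in> rev Bs ! i \<Longrightarrow> v \<in> rev Bs ! j \<Longrightarrow> i = j"
proof (rule ccontr)
  assume a: "i < length Bs" "j < length Bs" "v \<in> rev Bs ! i" "v \<in> rev Bs ! j" "i \<noteq> j"
  then consider "i < j" | "j < i" by linarith
  then show False
  proof cases
    case 1 then show False using ordR[OF 1 a(2) a(3) a(4)] by simp
  next
    case 2 then show False using ordR[OF 2 a(1) a(4) a(3)] by simp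
  qed
qed

lemma coverR: "v \<in> {1..n} \<Longrightarrow> \<exists>j<length Bs. v \<in> rev Bs ! j"
proof -
  assume "v \<in> {1..n}"
  then obtain i where i: "i < length Bs" "v \<in> Bs ! i" using cover by blast
  then show ?thesis using revnth[of "length Bs - Suc i"]
    by (intro exI[of _ "length Bs - Suc i"]) auto
qed

lemma blkR_sub: "j < length Bs \<Longrightarrow> rev Bs ! j \<subseteq> {1..n}"
  using blk_sub revnth by simp

lemma memD: "x \<in> \<Union> (set (take j (rev Bs))) \<longleftrightarrow> (\<exists>t<j. t < length Bs \<and> x \<in> rev Bs ! t)"
proof
  assume "x \<in> \<Union> (set (take j (rev Bs)))"
  then obtain X where "X \<in> set (take j (rev Bs))" "x \<in> X" by blast
  then obtain i where "i < length (take j (rev Bs))" "take j (rev Bs) ! i = X"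
    by (metis in_set_conv_nth)
  then show "\<exists>t<j. t < length Bs \<and> x \<in> rev Bs ! t" using \<open>x \<in> X\<close> by auto
next
  assume "\<exists>t<j. t < length Bs \<and> x \<in> rev Bs ! t"
  then obtain t where t: "t < j" "t < length Bs" "x \<in> rev Bs ! t" by blast
  then have "rev Bs ! t \<in> set (take j (rev Bs))"
    by (metis (no_types, lifting) in_set_conv_nth length_rev length_take min_less_iff_conj nth_take)
  then show "x \<in> \<Union> (set (take j (rev Bs)))" using t by blast
qed

definition m :: "nat \<Rightarrow> nat" where
  "m j = sum_list (map card (take j (rev Bs)))"

lemma card_D: "card (\<Union> (set (take j (rev Bs)))) = m j"
proof -
  have d: "distinct (take j (rev Bs))" using dist by simp
  have pw: "pairwise disjnt (set (take j (rev Bs)))"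
    unfolding pairwise_def disjnt_def
    by (auto simp: in_set_conv_nth) (metis uniqR nth_take order.strict_trans2 nat_less_le min_less_iff_conj)+
  have fin: "A \<in> set (take j (rev Bs)) \<Longrightarrow> finite A" for A
    using blk_fin by (auto dest!: in_set_takeD simp: in_set_conv_nth revnth)
  show ?thesis unfolding m_def
    using card_Union_disjoint[OF pw fin] sum_list_distinct_conv_sum_set[OF d] by metis
qed

lemma D_interval: "\<Union> (set (take j (rev Bs))) = {1..m j}"
proof -
  let ?D = "\<Union> (set (take j (rev Bs)))"
  have sub: "?D \<subseteq> {1..n}"
  proof
    fix x assume "x \<in> ?D"
    then obtain t where "t < length Bs" "x \<in> rev Bs ! t" using memD by blast
    then show "x \<in> {1..n}" using blkR_sub by blast
  qed
  have dc: "\<forall>x\<in>?D. \<forall>y. 1 \<le> y \<and> y \<le> x \<longrightarrow> y \<in> ?D"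
  proof (intro ballI allI impI)
    fix x y assume x: "x \<in> ?D" and y: "1 \<le> y \<and> y \<le> x"
    then obtain t where t: "t < j" "t < length Bs" "x \<in> rev Bs ! t" using memD by blast
    have "y \<in> {1..n}" using x y sub by auto
    then obtain t' where t': "t' < length Bs" "y \<in> rev Bs ! t'" using coverR by blast
    have "t' < j"
    proof (rule ccontr)
      assume "\<not> t' < j"
      then have "t < t'" using t by simp
      then have "x < y" using ordR t t' by blast
      then show False using y by simp
    qed
    then show "y \<in> ?D" using t' memD by blast
  qed
  have one: "\<forall>x\<in>?D. 1 \<le> x" using sub by auto
  have "?D = {1..card ?D}"
    using downclosed_interval[OF finite_subset[OF sub] one dc] by simp
  then show ?thesis using card_D by simp
qed

lemma pos: "j < length Bs \<Longrightarrow> v \<in> rev Bs ! j \<Longrightarrow> m j < v \<and> v \<le> m (Suc j)"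
proof -
  assume j: "j < length Bs" and v: "v \<in> rev Bs ! j"
  have "v \<in> \<Union> (set (take (Suc j) (rev Bs)))" using j v memD[of v "Suc j"] by blast
  then have 1: "v \<le> m (Suc j)" "1 \<le> v" using D_interval by auto
  have "v \<notin> \<Union> (set (take j (rev Bs)))" using j v uniqR memD[of v j] by (metis less_irrefl)
  then have "v \<notin> {1..m j}" using D_interval by simp
  then show ?thesis using 1 by auto
qed

lemma m_Suc: "j < length Bs \<Longrightarrow> m (Suc j) = m j + card (rev Bs ! j)"
  unfolding m_def by (simp add: take_Suc_conv_app_nth)

lemma m_all: "m (length Bs) = n"
proof -
  have "\<Union> (set (take (length Bs) (rev Bs))) = \<Union> (set Bs)" by simp
  also have "\<dots> = {1..n}"
    using setBs unfolding components_def graph_conn_def by auto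
  finally show ?thesis using D_interval[of "length Bs"] by (metis card_atLeastAtMost diff_Suc_1)
qed

definition W :: "nat list \<Rightarrow> nat list" where
  "W u = concat (map2 (\<lambda>a B. replicate (card B) a) u (rev Bs))"

lemma len_W: "length u = length Bs \<Longrightarrow> length (W u) = n"
proof -
  assume "length u = length Bs"
  then have "length (W u) = sum_list (map card (rev Bs))"
    unfolding W_def length_concat by (subst map_length_map2) auto
  then show ?thesis using m_all unfolding m_def by simp
qed

lemma nth_W:
  assumes u: "length u = length Bs" and v: "v \<in> {1..n}"
  shows "W u ! (v - 1) = u ! (contr_map Bs v - 1)"
proof -
  obtain i where i: "i < length Bs" "v \<in> Bs ! i" using cover v by blast
  define j where "j = length Bs - Suc i"
  have j: "j < length Bs" "rev Bs ! j = Bs ! i" using i by (auto simp: j_def revnth)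
  have cm: "contr_map Bs v - 1 = j" using cmap i j_def by simp
  let ?xs = "map2 (\<lambda>a B. replicate (card B) a) u (rev Bs)"
  have ml: "map length ?xs = map card (rev Bs)" by (rule map_length_map2) (simp add: u)
  have sj: "sum_list (map length (take j ?xs)) = m j"
    unfolding m_def by (metis ml take_map)
  have sj1: "sum_list (map length (take (Suc j) ?xs)) = m (Suc j)"
    unfolding m_def by (metis ml take_map)
  have p: "m j < v" "v \<le> m (Suc j)" using pos j i by auto
  have "W u ! (v - 1) = ?xs ! j ! (v - 1 - m j)"
    unfolding W_def using concat_nth_block[of j ?xs "v - 1"] j u p sj sj1 by simp
  also have "\<dots> = u ! j"
    using j u p m_Suc[OF j(1)] by simp
  finally show ?thesis using cm by simp
qed

lemma IW:
  assumes u: "length u = length Bs"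
  shows "induce_word (map (\<lambda>B. card B - 1) (take k Bs)) u = W u"
proof -
  let ?L = "length Bs" and ?h = "\<lambda>a B. replicate (card B) a"
  have rb: "rev Bs = rev (drop k Bs) @ rev (take k Bs)"
    by (metis append_take_drop_id rev_append)
  have l1: "length (take (?L - k) u) = length (rev (drop k Bs))" using u kle by simp
  have l2: "length (drop (?L - k) u) = length (rev (take k Bs))" using u kle by simp
  have ones: "\<forall>B\<in>set (rev (drop k Bs)). card B = 1"
    using sing by (auto simp: in_set_conv_nth)
  have posc: "\<forall>B\<in>set (rev (take k Bs)). card B \<ge> 1"
    using blk_card by (auto simp: in_set_conv_nth)
  have z: "zip u (rev Bs) = zip (take (?L - k) u) (rev (drop k Bs)) @ zip (drop (?L - k) u) (rev (take k Bs))"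
    by (metis rb append_take_drop_id zip_append[OF l1])
  have "W u = take (?L - k) u @ concat (map2 ?h (drop (?L - k) u) (rev (take k Bs)))"
    unfolding W_def z map_append concat_append using concat_map2_ones[OF l1 ones] by simp
  also have "\<dots> = induce_word (map (\<lambda>B. card B - 1) (take k Bs)) u"
    unfolding induce_word_def using u kle concat_map2_pos[OF l2 posc] by (simp add: rev_map)
  finally show ?thesis by simp
qed


lemma cm_range: "v \<in> {1..n} \<Longrightarrow> 1 \<le> contr_map Bs v \<and> contr_map Bs v \<le> length Bs"
proof -
  assume "v \<in> {1..n}"
  then obtain i where i: "i < length Bs" "v \<in> Bs ! i" using cover by blast
  then show ?thesis using cmap[OF i] by simp
qed

lemma main:
  assumes pg: "is_plurigraph n P" and EP: "E \<in># P"
  shows "(chrom_nc n P :: 'k::field_char_0 ncseries) w =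
           chrom_nc n (P - {#E#}) w
                - induce (length Bs) (map (\<lambda>B. card B - 1) (take k Bs))
                    (chrom_nc (length Bs) (contract Bs P E)) w"
proof -
  let ?L = "length Bs"
  let ?rs = "map (\<lambda>B. card B - 1) (take k Bs)"
  let ?PE = "P - {#E#}" and ?PC = "contract Bs P E"
  let ?phi = "contr_map Bs"
  define rep where "rep j = (SOME x. x \<in> rev Bs ! j)" for j
  have rep: "j < ?L \<Longrightarrow> rep j \<in> rev Bs ! j" for j
  proof -
    assume j: "j < ?L"
    then have "rev Bs ! j \<noteq> {}" using blk_ne[of "?L - Suc j"] revnth[OF j] by simp
    then show ?thesis unfolding rep_def by (meson ex_in_conv someI_ex)
  qed
  have repn: "j < ?L \<Longrightarrow> rep j \<in> {1..n}" for j using rep blkR_sub by blast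
  have phirep: "j < ?L \<Longrightarrow> ?phi (rep j) - 1 = j" for j
    using rep[of j] cmap[of "?L - Suc j" "rep j"] revnth[of j] by simp
  define uw where "uw = map (\<lambda>j. w ! (rep j - 1)) [0..<?L]"
  have luw: "length uw = ?L" unfolding uw_def by simp
  define S where "S = {u. length u = ?L \<and> set u \<subseteq> set w \<and> induce_word ?rs u = w}"
  have SS: "S \<subseteq> {uw}"
  proof
    fix u assume "u \<in> S"
    then have u: "length u = ?L" "W u = w" unfolding S_def using IW by auto
    have "u = uw"
    proof (rule nth_equalityI)
      show "length u = length uw" using u luw by simp
      fix j assume "j < length u"
      then have j: "j < ?L" using u by simp
      have "u ! j = W u ! (rep j - 1)" using nth_W[OF u(1) repn[OF j]] phirep[OF j] by simp
      then show "u ! j = uw ! j" using u j unfolding uw_def by simp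
    qed
    then show "u \<in> {uw}" by simp
  qed
  have ind: "induce ?L ?rs (chrom_nc ?L ?PC) w = (if uw \<in> S then (chrom_nc ?L ?PC uw :: 'k) else 0)"
  proof -
    have "induce ?L ?rs (chrom_nc ?L ?PC) w = (\<Sum>u\<in>S. (chrom_nc ?L ?PC u :: 'k))"
      unfolding induce_def S_def by simp
    also have "\<dots> = (if uw \<in> S then chrom_nc ?L ?PC uw else 0)"
      using SS by (cases "S = {}") (auto dest!: subset_singletonD)
    finally show ?thesis .
  qed
  define Ep where "Ep = (\<exists>a b. Upair a b \<in># E \<and> w ! (a - 1) \<noteq> w ! (b - 1))"
  have PPE: "proper_coloring n P w \<longleftrightarrow> proper_coloring n ?PE w \<and> Ep"
  proof -
    have "P = add_mset E ?PE" by (rule insert_DiffM[OF EP, symmetric])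
    have "proper_coloring n (add_mset E ?PE) w \<longleftrightarrow> proper_coloring n ?PE w \<and> Ep"
      unfolding proper_coloring_def Ep_def by auto
    moreover have "proper_coloring n P w \<longleftrightarrow> proper_coloring n (add_mset E ?PE) w"
      using arg_cong[OF \<open>P = add_mset E ?PE\<close>, of "\<lambda>X. proper_coloring n X w"] .
    ultimately show ?thesis by blast
  qed
  have PEin: "E' \<in># ?PE \<Longrightarrow> \<forall>e\<in>#E'. set_uprod e \<subseteq> {1..n}" for E'
    using pg unfolding is_plurigraph_def by (meson in_diffD)
  define Q where "Q = (uw \<in> S \<and> proper_coloring ?L ?PC uw)"
  have C1: "proper_coloring n ?PE w \<and> \<not> Ep" if Q
  proof -
    have inS: "uw \<in> S" and pu: "proper_coloring ?L ?PC uw" using that unfolding Q_def by auto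
    have Ww: "W uw = w" using inS IW luw unfolding S_def by auto
    have lw: "length w = n" using len_W luw Ww by auto
    have key: "v \<in> {1..n} \<Longrightarrow> w ! (v - 1) = uw ! (?phi v - 1)" for v
      using nth_W[OF luw] Ww by simp
    have col: "\<forall>c\<in>set w. 1 \<le> c"
    proof
      fix c assume "c \<in> set w"
      then obtain p where p: "p < n" "w ! p = c" using lw by (metis in_set_conv_nth)
      have "Suc p \<in> {1..n}" using p by simp
      then have "c = uw ! (?phi (Suc p) - 1)" "?phi (Suc p) - 1 < length uw"
        using key[of "Suc p"] p cm_range[of "Suc p"] luw by auto
      then have "c \<in> set uw" by simp
      then show "1 \<le> c" using pu unfolding proper_coloring_def by blast
    qed
    have edges: "\<forall>E'\<in>#?PE. \<exists>a b. Upair a b \<in># E' \<and> w ! (a - 1) \<noteq> w ! (b - 1)"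
    proof
      fix E' assume E': "E' \<in># ?PE"
      then have "image_mset (map_uprod ?phi) E' \<in># ?PC" unfolding contract_def by simp
      then obtain x y where xy: "Upair x y \<in># image_mset (map_uprod ?phi) E'" "uw ! (x - 1) \<noteq> uw ! (y - 1)"
        using pu unfolding proper_coloring_def by blast
      then obtain e where e: "e \<in># E'" "map_uprod ?phi e = Upair x y" by auto
      obtain a b where ab: "e = Upair a b" by (cases e)
      have abn: "a \<in> {1..n}" "b \<in> {1..n}" using PEin[OF E'] e ab by auto
      have "(x = ?phi a \<and> y = ?phi b) \<or> (x = ?phi b \<and> y = ?phi a)" using e ab by auto
      then have "w ! (a - 1) \<noteq> w ! (b - 1)" using key[OF abn(1)] key[OF abn(2)] xy(2) by auto
      then show "\<exists>a b. Upair a b \<in># E' \<and> w ! (a - 1) \<noteq> w ! (b - 1)" using e ab by blast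
    qed
    have nEp: "\<not> Ep"
    proof
      assume Ep
      then obtain a b where ab: "Upair a b \<in># E" "w ! (a - 1) \<noteq> w ! (b - 1)" unfolding Ep_def by blast
      then show False using key edge_in[OF ab(1)] edge_block[OF ab(1)] by auto
    qed
    show ?thesis using lw col edges nEp unfolding proper_coloring_def by blast
  qed
  have C2: Q if pw: "proper_coloring n ?PE w" and nEp: "\<not> Ep"
  proof -
    have mono: "\<forall>a b. Upair a b \<in># E \<longrightarrow> w ! (a - 1) = w ! (b - 1)" using nEp unfolding Ep_def by blast
    have lw: "length w = n" and col: "\<forall>c\<in>set w. 1 \<le> c" using pw unfolding proper_coloring_def by auto
    have key: "uw ! (?phi v - 1) = w ! (v - 1)" if v: "v \<in> {1..n}" for v
    proof -
      obtain i where i: "i < ?L" "v \<in> Bs ! i" using cover v by blast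
      define j where "j = ?L - Suc i"
      have j: "j < ?L" "rev Bs ! j = Bs ! i" using i by (auto simp: j_def revnth)
      have "?phi v - 1 = j" using cmap i j_def by simp
      then have "uw ! (?phi v - 1) = w ! (rep j - 1)" using j unfolding uw_def by simp
      also have "\<dots> = w ! (v - 1)"
      proof -
        have "rep j \<in> Bs ! i" using rep[OF j(1)] j(2) by simp
        then show ?thesis by (rule const_block[OF mono i(1) _ i(2)])
      qed
      finally show ?thesis .
    qed
    have Ww: "W uw = w"
    proof (rule nth_equalityI)
      show "length (W uw) = length w" using len_W[OF luw] lw by simp
      fix p assume "p < length (W uw)"
      then have p: "Suc p \<in> {1..n}" using len_W[OF luw] by simp
      show "W uw ! p = w ! p" using nth_W[OF luw p] key[OF p] by simp
    qed
    have suw: "set uw \<subseteq> set w"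
    proof
      fix c assume "c \<in> set uw"
      then obtain j where "j < ?L" "c = w ! (rep j - 1)" unfolding uw_def by auto
      moreover have "rep j - 1 < length w" using repn[OF \<open>j < ?L\<close>] lw by auto
      ultimately show "c \<in> set w" by simp
    qed
    have inS: "uw \<in> S" unfolding S_def using luw suw Ww IW[OF luw] by simp
    have "proper_coloring ?L ?PC uw"
      unfolding proper_coloring_def
    proof (intro conjI ballI)
      show "length uw = ?L" by (rule luw)
      show "1 \<le> c" if "c \<in> set uw" for c using that suw col by blast
      fix E'' assume "E'' \<in># ?PC"
      then obtain E' where E': "E' \<in># ?PE" "E'' = image_mset (map_uprod ?phi) E'"
        unfolding contract_def by auto
      obtain a b where ab: "Upair a b \<in># E'" "w ! (a - 1) \<noteq> w ! (b - 1)"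
        using pw E'(1) unfolding proper_coloring_def by blast
      have abn: "a \<in> {1..n}" "b \<in> {1..n}" using PEin[OF E'(1)] ab(1) by fastforce+
      have "map_uprod ?phi (Upair a b) \<in># E''" unfolding E'(2) set_image_mset using ab(1) by (rule imageI)
      then have "Upair (?phi a) (?phi b) \<in># E''" by simp
      moreover have "uw ! (?phi a - 1) \<noteq> uw ! (?phi b - 1)" using key abn ab(2) by simp
      ultimately show "\<exists>u v. Upair u v \<in># E'' \<and> uw ! (u - 1) \<noteq> uw ! (v - 1)" by blast
    qed
    then show Q unfolding Q_def using inS by simp
  qed
  have indQ: "induce ?L ?rs (chrom_nc ?L ?PC) w = (if Q then 1 else (0::'k))"
    unfolding ind Q_def chrom_nc_def by simp
  show ?thesis
  proof (cases Q)
    case True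
    then have h: "proper_coloring n ?PE w" "\<not> proper_coloring n P w" using C1 PPE by blast+
    show ?thesis unfolding indQ using True h by (simp add: chrom_nc_def)
  next
    case False
    then have h: "proper_coloring n P w \<longleftrightarrow> proper_coloring n ?PE w" using C2 PPE by blast
    show ?thesis unfolding indQ using False h by (simp add: chrom_nc_def)
  qed
qed

end


theorem theorem2p4:
  fixes n :: nat and P :: plurigraph_edges and E :: graph_edges
    and Bs :: "nat set list" and k :: nat
  assumes "is_plurigraph n P"
    and "E \<in># P"
    and "contraction_ready_comp n E Bs k"
  shows "(chrom_nc n P :: 'k::field_char_0 ncseries) =
           (\<lambda>w. chrom_nc n (P - {#E#}) w
                - induce (length Bs) (map (\<lambda>B. card B - 1) (take k Bs))
                    (chrom_nc (length Bs) (contract Bs P E)) w)"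
proof -
  have Eok: "\<forall>e\<in>#E. set_uprod e \<subseteq> {1..n}"
    using assms(1,2) unfolding is_plurigraph_def by blast
  interpret crc n E Bs k using assms(3) Eok by (rule crc.intro)
  show ?thesis using main[OF assms(1,2)] by (intro ext) simp
qed

end
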